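(* Consider the system of ordinary differential equations for $(x(t),h(t),n(t))$: \[ \frac{dx}{dt} = x(1-x)S(h) + \mu(h)(1-x) - \nu x,\qquad \frac{dh}{dt} = \alpha n(1+\beta x)\,G(h) - \Gamma(n)(h-1),\qquad \frac{dn}{dt} = r n(1-n) - D(h,x)\,n, \] where \[ S(h) = \frac{s_0}{1+e^{-\lambda(h-h_c)}} - c + \varphi\, d_S(h),\quad d_S(h) = \frac{d_{\max} h^m}{h_{50}^m + h^m},\quad \mu(h)=\mu_0 h^p, \] \[ G(h) = \frac{K_g}{K_g+h},\quad \Gamma(n) = \frac{\gamma_0}{1+\eta n},\quad D(h,x) = (1-\varphi x)\,d_S(h), \] with parameters $s_0,\lambda,h_c,c,d_{\max},h_{50},m,\mu_0,p,\alpha,\beta,K_g,\gamma_0,\eta,r$ positive, $0<\varphi\le 1$, and $\nu=0$. Assume $\mathcal{R}_0^* = \dfrac{r}{d_{\max}} > 1$. Then the system has a unique equilibrium of the form $E_1=(1,h^*,n^* )$ with $h^*>0$ and $n^*>0$, and $E_1\in[0,1]\times(0,\infty)\times[0,1]$.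
   Context: The model describes a tumor: $x$ is the fraction of acid-resistant cells, $h$ is the normalized proton concentration ($h=1$ physiological), $n$ is normalized tumor density. An equilibrium with $x^*=1$ is one with no acid-sensitive cells. *)

theory Defs
  imports Complex_Main
begin

text \<open>Tumour acidity model. Real exponents h^m, h^p are rendered with powr
(h > 0 throughout the statement).\<close>

definition dS :: "real \<Rightarrow> real \<Rightarrow> real \<Rightarrow> real \<Rightarrow> real" where
  "dS dmax h50 m h = dmax * h powr m / (h50 powr m + h powr m)"

definition Ssel :: "real \<Rightarrow> real \<Rightarrow> real \<Rightarrow> real \<Rightarrow> real \<Rightarrow> real \<Rightarrow> real \<Rightarrow> real \<Rightarrow> real \<Rightarrow> real" where
  "Ssel s0 lam hc c phi dmax h50 m h =
     s0 / (1 + exp (- lam * (h - hc))) - c + phi * dS dmax h50 m h"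

definition mu_fun :: "real \<Rightarrow> real \<Rightarrow> real \<Rightarrow> real" where
  "mu_fun mu0 p h = mu0 * h powr p"

definition G_fun :: "real \<Rightarrow> real \<Rightarrow> real" where
  "G_fun Kg h = Kg / (Kg + h)"

definition Gamma_fun :: "real \<Rightarrow> real \<Rightarrow> real \<Rightarrow> real" where
  "Gamma_fun gamma0 eta n = gamma0 / (1 + eta * n)"

definition D_fun :: "real \<Rightarrow> real \<Rightarrow> real \<Rightarrow> real \<Rightarrow> real \<Rightarrow> real \<Rightarrow> real" where
  "D_fun phi dmax h50 m h x = (1 - phi * x) * dS dmax h50 m h"

definition fx :: "real \<Rightarrow> real \<Rightarrow> real \<Rightarrow> real \<Rightarrow> real \<Rightarrow> real \<Rightarrow> real \<Rightarrow> real \<Rightarrow> real \<Rightarrow> real \<Rightarrow> real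
                  \<Rightarrow> real \<Rightarrow> real \<Rightarrow> real" where
  "fx s0 lam hc c phi dmax h50 m mu0 p nu x h =
     x * (1 - x) * Ssel s0 lam hc c phi dmax h50 m h + mu_fun mu0 p h * (1 - x) - nu * x"

definition fh :: "real \<Rightarrow> real \<Rightarrow> real \<Rightarrow> real \<Rightarrow> real \<Rightarrow> real \<Rightarrow> real \<Rightarrow> real \<Rightarrow> real" where
  "fh alpha beta Kg gamma0 eta x h n =
     alpha * n * (1 + beta * x) * G_fun Kg h - Gamma_fun gamma0 eta n * (h - 1)"

definition fn :: "real \<Rightarrow> real \<Rightarrow> real \<Rightarrow> real \<Rightarrow> real \<Rightarrow> real \<Rightarrow> real \<Rightarrow> real \<Rightarrow> real" where
  "fn r phi dmax h50 m x h n = r * n * (1 - n) - D_fun phi dmax h50 m h x * n"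

end

theory Submission
  imports Defs
begin

lemma dS_bounds:
  assumes "dmax > 0" "h50 > 0" "h > 0"
  shows "0 < dS dmax h50 m h" "dS dmax h50 m h < dmax"
proof -
  have a: "h powr m > 0" "h50 powr m > 0" using assms by auto
  have s: "h50 powr m + h powr m > 0" using a by linarith
  show "0 < dS dmax h50 m h" unfolding dS_def
    by (intro divide_pos_pos mult_pos_pos add_pos_pos) (use a assms in auto)
  show "dS dmax h50 m h < dmax" unfolding dS_def using a assms s
    by (simp add: divide_less_eq)
qed

lemma frac_aux: fixes u v k :: real assumes "0 < u" "u \<le> v" "0 < k"
  shows "u / (k + u) \<le> v / (k + v)"
proof -
  have "u * (k + v) \<le> v * (k + u)" using assms by (simp add: algebra_simps mult_right_mono)
  then show ?thesis using assms by (simp add: divide_simps)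
qed
lemma dS_mono:
  assumes "dmax > 0" "h50 > 0" "0 < a" "a \<le> b" "m > 0"
  shows "dS dmax h50 m a \<le> dS dmax h50 m b"
proof -
  have a: "a powr m > 0" "h50 powr m > 0" "b powr m > 0" using assms by auto
  have le: "a powr m \<le> b powr m" using assms by (simp add: powr_mono2)
  have "a powr m / (h50 powr m + a powr m) \<le> b powr m / (h50 powr m + b powr m)"
    by (rule frac_aux[OF a(1) le a(2)])
  then show ?thesis unfolding dS_def using assms
    by (metis mult_left_mono less_imp_le times_divide_eq_right)
qed
lemma dS_cont:
  assumes "h50 > 0" "h > 0"
  shows "isCont (dS dmax h50 m) h"
proof -
  have pp: "h powr m > 0" "h50 powr m > 0" using assms by auto
  have s: "h50 powr m + h powr m \<noteq> 0" using pp by linarith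
  show ?thesis unfolding dS_def[abs_def]
    by (intro continuous_intros) (use s assms in auto)
qed

lemma fh_aux: fixes n h Kg eta gamma0 alpha beta :: real
  assumes "n > 0" "h > 0" "Kg > 0" "eta > 0" "gamma0 > 0"
  shows "alpha * n * (1 + beta * 1) * (Kg / (Kg + h)) - gamma0 / (1 + eta * n) * (h - 1)
     = gamma0 / (1 + eta * n) * (alpha * (1 + beta) * Kg / gamma0 * n * (1 + eta * n) / (Kg + h) - (h - 1))"
proof -
  have d: "1 + eta * n \<noteq> 0" "Kg + h \<noteq> 0" "gamma0 \<noteq> 0" using assms by (smt (verit) mult_pos_pos)+
  have "gamma0 / (1 + eta * n) * (alpha * (1 + beta) * Kg / gamma0 * n * (1 + eta * n) / (Kg + h))
      = alpha * n * (1 + beta * 1) * (Kg / (Kg + h))" using d by (simp add: divide_simps ac_simps)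
  then show ?thesis by (simp add: right_diff_distrib)
qed

theorem theorem3:
  fixes s0 lam hc c dmax h50 m mu0 p alpha beta Kg gamma0 eta r phi nu :: real
  assumes "s0 > 0" "lam > 0" "hc > 0" "c > 0" "dmax > 0" "h50 > 0" "m > 0"
    "mu0 > 0" "p > 0" "alpha > 0" "beta > 0" "Kg > 0" "gamma0 > 0" "eta > 0" "r > 0"
    and "0 < phi" "phi \<le> 1"
    and "nu = 0"
    and "r / dmax > 1"
  shows "\<exists>h n. h > 0 \<and> n > 0 \<and>
            fx s0 lam hc c phi dmax h50 m mu0 p nu 1 h = 0 \<and>
            fh alpha beta Kg gamma0 eta 1 h n = 0 \<and>
            fn r phi dmax h50 m 1 h n = 0 \<and>
            (\<forall>h' n'. h' > 0 \<and> n' > 0 \<and>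
               fx s0 lam hc c phi dmax h50 m mu0 p nu 1 h' = 0 \<and>
               fh alpha beta Kg gamma0 eta 1 h' n' = 0 \<and>
               fn r phi dmax h50 m 1 h' n' = 0 \<longrightarrow> h' = h \<and> n' = n) \<and>
            (1::real) \<in> {0..1} \<and> h \<in> {0<..} \<and> n \<in> {0..1}"
proof -
  have rd: "dmax < r" using assms by (simp add: less_divide_eq)
  define q where "q = 1 - phi"
  have q: "0 \<le> q" "q < 1" using assms unfolding q_def by auto
  define N where "N h = 1 - q * dS dmax h50 m h / r" for h
  define A where "A = alpha * (1 + beta) * Kg / gamma0"
  have A: "A > 0" using assms unfolding A_def by auto
  define F where "F h = A * N h * (1 + eta * N h) / (Kg + h) - (h - 1)" for h
  have Npos: "0 < N h" "N h \<le> 1" if "h > 0" for h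
  proof -
    have "q * dS dmax h50 m h \<le> dS dmax h50 m h" using q dS_bounds[where m=m, OF assms(5,6) that]
      by (simp add: mult_le_cancel_right1)
    then have "q * dS dmax h50 m h < r" using dS_bounds[where m=m, OF assms(5,6) that] rd by linarith
    then show "0 < N h" unfolding N_def using assms by (simp add: divide_less_eq)
    show "N h \<le> 1" unfolding N_def using q dS_bounds[where m=m, OF assms(5,6) that] assms by simp
  qed
  have Nmono: "N b \<le> N a" if "0 < a" "a \<le> b" for a b
  proof -
    have "q * dS dmax h50 m a \<le> q * dS dmax h50 m b"
      using dS_mono[OF assms(5,6) that assms(7)] q by (simp add: mult_left_mono)
    then show ?thesis unfolding N_def using assms by (simp add: divide_right_mono)
  qed
  have Fdec: "F b < F a" if "0 < a" "a < b" for a b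
  proof -
    have n: "N b \<le> N a" "0 < N b" using Nmono[of a b] Npos[of b] that by auto
    have "N b * (1 + eta * N b) \<le> N a * (1 + eta * N a)"
      using n assms by (intro mult_mono) (auto intro: mult_left_mono add_left_mono)
    then have "A * (N b * (1 + eta * N b)) \<le> A * (N a * (1 + eta * N a))"
      using A by (simp add: mult_left_mono)
    moreover have "0 \<le> A * (N b * (1 + eta * N b))" using A n assms by simp
    ultimately have "A * (N b * (1 + eta * N b)) / (Kg + b) \<le> A * (N a * (1 + eta * N a)) / (Kg + a)"
      using that assms by (intro frac_le) auto
    then show ?thesis unfolding F_def using that by (simp add: mult.assoc)
  qed
  define H where "H = 1 + A * (1 + eta) / Kg"
  have H1: "1 < H" using A assms unfolding H_def by simp
  have F1: "F 1 > 0" unfolding F_def using Npos[of 1] A assms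
    by (simp add: add_pos_pos)
  have FH: "F H < 0"
  proof -
    have n: "0 < N H" "N H \<le> 1" using Npos[of H] H1 by auto
    have nn: "N H * (1 + eta * N H) \<le> 1 * (1 + eta * 1)"
      using n assms by (intro mult_mono) auto
    have "A * N H * (1 + eta * N H) \<le> A * (1 + eta)"
      using mult_left_mono[OF nn, of A] A by (simp add: mult.assoc)
    also have "\<dots> < A * (1 + eta) / Kg * (Kg + H)"
    proof -
      have "A * (1 + eta) / Kg * (Kg + H) = A * (1 + eta) + A * (1 + eta) / Kg * H"
        using assms by (simp add: field_simps)
      moreover have "A * (1 + eta) / Kg * H > 0" using A assms H1 by simp
      ultimately show ?thesis by simp
    qed
    finally have "A * N H * (1 + eta * N H) / (Kg + H) < A * (1 + eta) / Kg"
      using assms H1 by (simp add: divide_less_eq)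
    then show ?thesis unfolding F_def H_def by simp
  qed
  have contF: "isCont F h" if "h > 0" for h
  proof -
    have "isCont N h" unfolding N_def[abs_def]
      by (intro continuous_intros dS_cont[OF assms(6) that]) (use assms in auto)
    then show ?thesis unfolding F_def[abs_def] using that assms
      by (intro continuous_intros) auto
  qed
  obtain h where h: "1 \<le> h" "h \<le> H" "F h = 0"
    using IVT2[of F H 0 1] F1 FH H1 contF by force
  have hpos: "h > 0" using h by simp
  have key: "fn r phi dmax h50 m 1 h' n' = 0 \<longleftrightarrow> n' = N h'" if "n' > 0" for h' n'
  proof -
    have "fn r phi dmax h50 m 1 h' n' = n' * (r * (1 - n') - q * dS dmax h50 m h')"
      unfolding fn_def D_fun_def q_def by (simp add: algebra_simps)
    also have "\<dots> = 0 \<longleftrightarrow> r * (1 - n') - q * dS dmax h50 m h' = 0" using that by simp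
    also have "\<dots> \<longleftrightarrow> n' = N h'" unfolding N_def using assms by (auto simp: field_simps)
    finally show ?thesis .
  qed
  have key2: "fh alpha beta Kg gamma0 eta 1 h' (N h') = 0 \<longleftrightarrow> F h' = 0" if "h' > 0" for h'
  proof -
    have p: "0 < N h'" using Npos that by auto
    have "fh alpha beta Kg gamma0 eta 1 h' (N h') =
          gamma0 / (1 + eta * N h') * F h'"
      unfolding fh_def G_fun_def Gamma_fun_def F_def A_def
      using fh_aux[OF p that assms(12,14,13), of alpha beta] by (simp add: mult.assoc)
    moreover have "1 + eta * N h' > 0" using p assms by (simp add: add_pos_pos)
    ultimately show ?thesis using assms by simp
  qed
  have fx0: "fx s0 lam hc c phi dmax h50 m mu0 p nu 1 h' = 0" for h'
    unfolding fx_def using assms by simp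
  have N1: "0 < N h" "N h \<in> {0..1}" using Npos[OF hpos] by auto
  have fn1: "fn r phi dmax h50 m 1 h (N h) = 0" using key[of "N h" h] Npos[OF hpos] by simp
  have fh1: "fh alpha beta Kg gamma0 eta 1 h (N h) = 0" using key2[OF hpos] h by simp
  have u: "\<forall>h' n'. h' > 0 \<and> n' > 0 \<and>
               fx s0 lam hc c phi dmax h50 m mu0 p nu 1 h' = 0 \<and>
               fh alpha beta Kg gamma0 eta 1 h' n' = 0 \<and>
               fn r phi dmax h50 m 1 h' n' = 0 \<longrightarrow> h' = h \<and> n' = N h"
  proof (intro allI impI)
    fix h' n' assume a: "0 < h' \<and> 0 < n' \<and> fx s0 lam hc c phi dmax h50 m mu0 p nu 1 h' = 0 \<and>
      fh alpha beta Kg gamma0 eta 1 h' n' = 0 \<and> fn r phi dmax h50 m 1 h' n' = 0"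
    then have n': "n' = N h'" using key by auto
    then have Fh': "F h' = 0" using key2 a by auto
    have "h' = h"
    proof (rule ccontr)
      assume "h' \<noteq> h"
      then consider "h' < h" | "h < h'" by linarith
      then show False using Fdec[of h' h] Fdec[of h h'] a hpos Fh' h by cases auto
    qed
    then show "h' = h \<and> n' = N h" using n' by simp
  qed
  have e: "(1::real) \<in> {0..1}" "h \<in> {0<..}" using hpos by auto
  show ?thesis
    apply (rule exI[of _ h], rule exI[of _ "N h"])
    using hpos fx0[of h] N1 fn1 fh1 u e by blast
qed

end
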